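(* Let $X$ be a vector space, let $p:X\to\mathbb{R}$ be a sub-additive functional (i.e., $p(x+y)\le p(x)+p(y)$ for all $x,y\in X$), let $S$ be a proper subset of $X$, and let $F:S\to\mathbb{R}$ satisfy $F(s_1)+F(s_2)\le p(s_1+s_2)$ for all $s_1,s_2\in S$ with $s_1\neq s_2$. Then $F$ has an extension $\hat F:X\to\mathbb{R}$ with $\hat F(s)=F(s)$ for all $s\in S$ and $\hat F(x_1)+\hat F(x_2)\le p(x_1+x_2)$ for all $x_1,x_2\in X$ with $x_1\neq x_2$.
   Context: $X$ is a vector space over $K$, where $K$ is $\mathbb{R}$ or $\mathbb{C}$. *)

theory Defs
  imports Complex_Main
begin

end

theory Submission
  imports Defs
begin

theorem theorem4:
  fixes p :: "'a::real_vector \<Rightarrow> real" and S :: "'a set" and F :: "'a \<Rightarrow> real"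
  assumes subadd: "\<forall>x y. p (x + y) \<le> p x + p y"
    and proper: "S \<subset> UNIV"
    and F_le: "\<forall>s1\<in>S. \<forall>s2\<in>S. s1 \<noteq> s2 \<longrightarrow> F s1 + F s2 \<le> p (s1 + s2)"
  shows "\<exists>Fh :: 'a \<Rightarrow> real. (\<forall>s\<in>S. Fh s = F s) \<and>
           (\<forall>x1 x2. x1 \<noteq> x2 \<longrightarrow> Fh x1 + Fh x2 \<le> p (x1 + x2))"
proof -
  define s0 where "s0 = (SOME s. s \<in> S)"
  define Fh where "Fh x = (if x \<in> S then F x else
      min (- p (- x)) (min (F s0 - p (s0 - x)) (p (x + s0) - F s0)))" for x
  have p0: "p 0 \<ge> 0" using subadd[rule_format, of 0 0] by simp
  have neg: "- p (- z) \<le> p z" for z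
    using subadd[rule_format, of z "-z"] p0 by simp
  have A: "F x + Fh y \<le> p (x + y)" if x: "x \<in> S" and y: "y \<notin> S" for x y
  proof -
    have s0: "s0 \<in> S" using x unfolding s0_def by (meson someI)
    have Fy: "Fh y \<le> F s0 - p (s0 - y)" "Fh y \<le> p (y + s0) - F s0"
      using y by (auto simp: Fh_def)
    show ?thesis
    proof (cases "x = s0")
      case True thus ?thesis using Fy(2) by (simp add: add.commute)
    next
      case False
      have "F x + F s0 \<le> p (x + s0)" using F_le x s0 False by blast
      also have "x + s0 = (x + y) + (s0 - y)" by simp
      finally have "F x + F s0 \<le> p ((x + y) + (s0 - y))" .
      moreover have "p ((x + y) + (s0 - y)) \<le> p (x + y) + p (s0 - y)"
        using subadd by blast
      ultimately show ?thesis using Fy(1) by linarith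
    qed
  qed
  have B: "Fh x + Fh y \<le> p (x + y)" if "x \<notin> S" "y \<notin> S" for x y
  proof -
    have "Fh x \<le> - p (- x)" "Fh y \<le> - p (- y)" using that by (auto simp: Fh_def)
    moreover have "p (- (x + y)) \<le> p (- x) + p (- y)"
      using subadd[rule_format, of "-x" "-y"] by (simp add: add.commute)
    moreover note neg[of "x + y"]
    ultimately show ?thesis by linarith
  qed
  have "Fh x1 + Fh x2 \<le> p (x1 + x2)" if "x1 \<noteq> x2" for x1 x2
  proof (cases "x1 \<in> S")
    case True
    show ?thesis
    proof (cases "x2 \<in> S")
      case True2: True
      thus ?thesis using True that F_le by (simp add: Fh_def)
    next
      case False
      thus ?thesis using A[OF True False] True by (simp add: Fh_def)
    qed
  next
    case False
    show ?thesis
    proof (cases "x2 \<in> S")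
      case True2: True
      thus ?thesis using A[OF True2 False] False by (simp add: Fh_def add.commute)
    next
      case False2: False
      thus ?thesis using B[OF False False2] by simp
    qed
  qed
  moreover have "\<forall>s\<in>S. Fh s = F s" by (simp add: Fh_def)
  ultimately show ?thesis by blast
qed

end
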